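(* Let $\mathbb{F}$ be a field and $n \ge 1$ an integer. For each integer $K \ge 1$, let $M_n(K)$ denote the set of monomial ideals $I$ of $\mathbb{F}[X_1,\ldots,X_n]$ such that the quotient space $\mathbb{F}[X_1,\ldots,X_n]/I$ has dimension exactly $K$ over $\mathbb{F}$. Then $|M_n(1)| = 1$, and for every $K \ge 2$, $$|M_n(K)| \le K^n (K+n-2)^{(n-1)(K-1)} (2K-3)^{K-2}.$$ In particular, for every real number $R > 1$ there exists a constant $c$, depending only on $n$ and $R$, such that $|M_n(K)| \le c\, R^{K^{3/2}}$ for all integers $K \ge 1$.
   Context: A monomial ideal of $\mathbb{F}[X_1,\ldots,X_n]$ is an ideal generated by monomials $X_1^{j_1}\cdots X_n^{j_n}$. *)

theory Defs
  imports Complex_Main "HOL-Library.Poly_Mapping"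
begin

text \<open>Multivariate polynomials over a field 'a are represented as finitely supported
  maps from monomials (exponent vectors, nat =>0 nat) to coefficients; the ring
  structure (convolution product) is the one of HOL-Library.Poly_Mapping.
  The variables X_1,...,X_n are the indices 0,...,n-1.\<close>

type_synonym 'a mpoly = "(nat \<Rightarrow>\<^sub>0 nat) \<Rightarrow>\<^sub>0 'a"

definition polyring :: "nat \<Rightarrow> 'a::field mpoly set" where
  "polyring n = {p. \<forall>m \<in> Poly_Mapping.keys p. Poly_Mapping.keys m \<subseteq> {..<n}}"

definition monomials :: "nat \<Rightarrow> 'a::field mpoly set" where
  "monomials n = {Poly_Mapping.single m 1 | m. Poly_Mapping.keys m \<subseteq> {..<n}}"

definition is_ideal :: "nat \<Rightarrow> 'a::field mpoly set \<Rightarrow> bool" where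
  "is_ideal n I \<longleftrightarrow> I \<subseteq> polyring n \<and> 0 \<in> I \<and>
     (\<forall>p\<in>I. \<forall>q\<in>I. p + q \<in> I) \<and>
     (\<forall>r\<in>polyring n. \<forall>p\<in>I. r * p \<in> I)"

definition gen_ideal :: "nat \<Rightarrow> 'a::field mpoly set \<Rightarrow> 'a mpoly set" where
  "gen_ideal n S = \<Inter>{I. is_ideal n I \<and> S \<subseteq> I}"

definition monomial_ideal :: "nat \<Rightarrow> 'a::field mpoly set \<Rightarrow> bool" where
  "monomial_ideal n I \<longleftrightarrow> (\<exists>G \<subseteq> monomials n. I = gen_ideal n G)"

definition smult_mp :: "'a::field \<Rightarrow> 'a mpoly \<Rightarrow> 'a mpoly" where
  "smult_mp c p = Poly_Mapping.single 0 c * p"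

definition quot_dim :: "nat \<Rightarrow> 'a::field mpoly set \<Rightarrow> nat \<Rightarrow> bool" where
  "quot_dim n I K \<longleftrightarrow> (\<exists>B. finite B \<and> card B = K \<and> B \<subseteq> polyring n \<and>
     (\<forall>c. (\<Sum>b\<in>B. smult_mp (c b) b) \<in> I \<longrightarrow> (\<forall>b\<in>B. c b = 0)) \<and>
     (\<forall>p\<in>polyring n. \<exists>c. p - (\<Sum>b\<in>B. smult_mp (c b) b) \<in> I))"

definition M :: "'a::field itself \<Rightarrow> nat \<Rightarrow> nat \<Rightarrow> 'a mpoly set set" where
  "M _ n K = {I. monomial_ideal n I \<and> quot_dim n I K}"

end

theory Submission
  imports Defs "HOL-Real_Asymp.Real_Asymp"
begin

lemma lookup_smult: "Poly_Mapping.lookup (smult_mp c p) m = c * Poly_Mapping.lookup p m"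
  unfolding smult_mp_def mult_map_scale_conv_mult[symmetric]
  by (simp add: Poly_Mapping.map.rep_eq when_def)

lemma smult_mp_eq: "smult_mp c p = Poly_Mapping.single 0 c * p"
  by (simp add: smult_mp_def)

interpretation mp: vector_space "smult_mp :: 'a::field \<Rightarrow> 'a mpoly \<Rightarrow> 'a mpoly"
  by unfold_locales (auto intro!: poly_mapping_eqI simp: lookup_smult lookup_add algebra_simps)

lemma poly_expand: "p = (\<Sum>m\<in>Poly_Mapping.keys p. Poly_Mapping.single m (Poly_Mapping.lookup p m))"
proof (rule poly_mapping_eqI)
  fix k
  show "Poly_Mapping.lookup p k = Poly_Mapping.lookup (\<Sum>m\<in>Poly_Mapping.keys p. Poly_Mapping.single m (Poly_Mapping.lookup p m)) k"
    by (cases "k \<in> Poly_Mapping.keys p") (auto simp: lookup_sum lookup_single when_def in_keys_iff)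
qed

lemma polyring_0[simp]: "0 \<in> polyring n" by (simp add: polyring_def)

lemma polyring_add: "p \<in> polyring n \<Longrightarrow> q \<in> polyring n \<Longrightarrow> p + q \<in> polyring n"
  unfolding polyring_def using keys_add[of p q] by blast

lemma polyring_mult: "p \<in> polyring n \<Longrightarrow> q \<in> polyring n \<Longrightarrow> p * q \<in> polyring n"
proof -
  assume p: "p \<in> polyring n" and q: "q \<in> polyring n"
  { fix m assume "m \<in> Poly_Mapping.keys (p * q)"
    then obtain a b where "m = a + b" "a \<in> Poly_Mapping.keys p" "b \<in> Poly_Mapping.keys q"
      using keys_mult by blast
    with p q have "Poly_Mapping.keys m \<subseteq> {..<n}" unfolding polyring_def
      using keys_add[of a b] by blast }
  then show ?thesis by (simp add: polyring_def)
qed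

lemma polyring_single: "Poly_Mapping.keys m \<subseteq> {..<n} \<Longrightarrow> Poly_Mapping.single m c \<in> polyring n"
  by (simp add: polyring_def)

lemma polyring_smult: "p \<in> polyring n \<Longrightarrow> smult_mp c p \<in> polyring n"
  unfolding smult_mp_eq by (rule polyring_mult[OF polyring_single]) auto

lemma polyring_sum: "(\<And>x. x \<in> A \<Longrightarrow> f x \<in> polyring n) \<Longrightarrow> sum f A \<in> polyring n"
  by (induction A rule: infinite_finite_induct) (auto intro: polyring_add)

lemma polyring_minus: assumes a: "p \<in> polyring n" "q \<in> polyring n" shows "p - q \<in> polyring n"
proof -
  have eq: "p - q = p + smult_mp (-1) q"
    by (rule poly_mapping_eqI) (simp add: lookup_add lookup_minus lookup_smult)
  show ?thesis unfolding eq by (intro polyring_add polyring_smult a)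
qed

lemma is_ideal_polyring: "is_ideal n (polyring n)"
  by (auto simp: is_ideal_def intro: polyring_add polyring_mult)

lemma gen_mem: "x \<in> gen_ideal n G \<longleftrightarrow> (\<forall>J. is_ideal n J \<and> G \<subseteq> J \<longrightarrow> x \<in> J)"
  by (simp add: gen_ideal_def)

lemma is_ideal_gen: fixes G :: "'a::field mpoly set" assumes "G \<subseteq> polyring n" shows "is_ideal n (gen_ideal n G)"
  unfolding is_ideal_def
proof (intro conjI ballI subsetI)
  fix x assume "x \<in> gen_ideal n G" then show "x \<in> polyring n"
    using assms is_ideal_polyring[of n] unfolding gen_mem by blast
next
  show "0 \<in> gen_ideal n G" by (simp add: gen_mem is_ideal_def)
next
  fix p q :: "'a mpoly" assume "p \<in> gen_ideal n G" "q \<in> gen_ideal n G"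
  then show "p + q \<in> gen_ideal n G" by (simp add: gen_mem is_ideal_def)
next
  fix r p :: "'a mpoly" assume "r \<in> polyring n" "p \<in> gen_ideal n G"
  then show "r * p \<in> gen_ideal n G" by (simp add: gen_mem is_ideal_def)
qed

lemma gen_sub: "G \<subseteq> gen_ideal n G"
  by (auto simp: gen_mem)

lemma gen_least: "is_ideal n J \<Longrightarrow> G \<subseteq> J \<Longrightarrow> gen_ideal n G \<subseteq> J"
  by (auto simp: gen_mem)

lemma monomials_sub: "monomials n \<subseteq> polyring n"
  unfolding monomials_def by (auto intro: polyring_single)

lemma ideal_smult: "is_ideal n I \<Longrightarrow> p \<in> I \<Longrightarrow> smult_mp c p \<in> I"
  unfolding smult_mp_eq is_ideal_def using polyring_single[of 0 n c] by auto

lemma ideal_sum: "is_ideal n I \<Longrightarrow> (\<And>x. x \<in> A \<Longrightarrow> f x \<in> I) \<Longrightarrow> sum f A \<in> I"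
  by (induction A rule: infinite_finite_induct) (auto simp: is_ideal_def)

lemma ideal_diff: assumes a: "is_ideal n I" "p \<in> I" "q \<in> I" shows "p - q \<in> I"
proof -
  have eq: "p - q = p + smult_mp (-1) q"
    by (rule poly_mapping_eqI) (simp add: lookup_add lookup_minus lookup_smult)
  show ?thesis unfolding eq using a(1) unfolding is_ideal_def using a(2) ideal_smult[OF a(1) a(3)] by blast
qed

lemma ideal_from_monos:
  assumes I: "is_ideal n I" and p: "p \<in> polyring n"
    and h: "\<And>m. m \<in> Poly_Mapping.keys p \<Longrightarrow> Poly_Mapping.single m 1 \<in> I"
  shows "p \<in> I"
proof -
  have "p = (\<Sum>m\<in>Poly_Mapping.keys p. smult_mp (Poly_Mapping.lookup p m) (Poly_Mapping.single m 1))"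
    by (subst poly_expand) (simp add: smult_mp_eq mult_single)
  also have "\<dots> \<in> I" using I h by (intro ideal_sum ideal_smult) auto
  finally show ?thesis .
qed

definition pdiv :: "(nat \<Rightarrow>\<^sub>0 nat) \<Rightarrow> (nat \<Rightarrow>\<^sub>0 nat) \<Rightarrow> bool" where
  "pdiv g m \<longleftrightarrow> (\<forall>i. Poly_Mapping.lookup g i \<le> Poly_Mapping.lookup m i)"

lemma pdiv_add: "pdiv g m \<Longrightarrow> (m - g) + g = m"
  by (rule poly_mapping_eqI) (simp add: pdiv_def lookup_add lookup_minus)

lemma keys_minus_sub: "Poly_Mapping.keys (m - (g::nat \<Rightarrow>\<^sub>0 nat)) \<subseteq> Poly_Mapping.keys m"
  by (auto simp: in_keys_iff lookup_minus)

lemma mono_ideal_char: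
  fixes I :: "'a::field mpoly set"
  assumes mi: "monomial_ideal n I" and p: "p \<in> I" and m: "m \<in> Poly_Mapping.keys p"
  shows "Poly_Mapping.single m 1 \<in> I"
proof -
  obtain G where G: "G \<subseteq> monomials n" "I = gen_ideal n G"
    using mi unfolding monomial_ideal_def by blast
  have Ii: "is_ideal n I" using G is_ideal_gen monomials_sub by blast
  define E where "E = {g. Poly_Mapping.single g 1 \<in> G}"
  define J :: "'a mpoly set" where "J = {p \<in> polyring n. \<forall>m\<in>Poly_Mapping.keys p. \<exists>g\<in>E. pdiv g m}"
  have "is_ideal n J"
    unfolding is_ideal_def
  proof (intro conjI ballI)
    show "J \<subseteq> polyring n" unfolding J_def by blast
    show "0 \<in> J" unfolding J_def by simp
  next
    fix p q assume "p \<in> J" "q \<in> J"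
    then show "p + q \<in> J" unfolding J_def using keys_add[of p q] polyring_add[of p n q] by blast
  next
    fix r p :: "'a mpoly" assume r: "r \<in> polyring n" and p: "p \<in> J"
    have "\<exists>g\<in>E. pdiv g m" if mk: "m \<in> Poly_Mapping.keys (r * p)" for m
    proof -
      obtain a b where ab: "m = a + b" "a \<in> Poly_Mapping.keys r" "b \<in> Poly_Mapping.keys p"
        using keys_mult[of r p] mk by blast
      then obtain g where "g \<in> E" "pdiv g b" using p unfolding J_def by blast
      then show ?thesis using ab by (auto simp: pdiv_def lookup_add intro!: bexI[of _ g] trans_le_add2)
    qed
    then show "r * p \<in> J" using r p polyring_mult unfolding J_def by blast
  qed
  moreover have "G \<subseteq> J"
  proof
    fix x assume "x \<in> G"
    then obtain g where g: "x = Poly_Mapping.single g 1" "Poly_Mapping.keys g \<subseteq> {..<n}"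
      using G unfolding monomials_def by blast
    then show "x \<in> J" using \<open>x \<in> G\<close> unfolding J_def E_def
      by (auto intro!: polyring_single simp: pdiv_def)
  qed
  ultimately have "I \<subseteq> J" using G gen_least by blast
  with p m obtain g where g: "g \<in> E" "pdiv g m" unfolding J_def by blast
  have pm: "p \<in> polyring n" using p Ii unfolding is_ideal_def by blast
  have "Poly_Mapping.keys (m - g) \<subseteq> {..<n}"
    using keys_minus_sub[of m g] pm m unfolding polyring_def by blast
  then have s1: "Poly_Mapping.single (m - g) (1::'a) \<in> polyring n" by (rule polyring_single)
  have sg: "Poly_Mapping.single g 1 \<in> I" using g(1) G(2) gen_sub unfolding E_def by blast
  have "Poly_Mapping.single (m - g) 1 * Poly_Mapping.single g 1 \<in> I"
    using Ii s1 sg unfolding is_ideal_def by blast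
  moreover have "Poly_Mapping.single (m - g) (1::'a) * Poly_Mapping.single g 1 = Poly_Mapping.single m 1"
    by (simp only: mult_single pdiv_add[OF g(2)] mult_1)
  ultimately show ?thesis by simp
qed



definition std :: "nat \<Rightarrow> 'a::field mpoly set \<Rightarrow> (nat \<Rightarrow>\<^sub>0 nat) set" where
  "std n I = {m. Poly_Mapping.keys m \<subseteq> {..<n} \<and> Poly_Mapping.single m 1 \<notin> I}"

definition proj :: "(nat \<Rightarrow>\<^sub>0 nat) set \<Rightarrow> 'a::field mpoly \<Rightarrow> 'a mpoly" where
  "proj S p = Abs_poly_mapping (\<lambda>m. if m \<in> S then Poly_Mapping.lookup p m else 0)"

lemma lookup_proj: "Poly_Mapping.lookup (proj S p) m = (if m \<in> S then Poly_Mapping.lookup p m else 0)"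
proof -
  have "finite {m. (if m \<in> S then Poly_Mapping.lookup p m else 0) \<noteq> 0}"
    by (rule finite_subset[of _ "Poly_Mapping.keys p"]) (auto simp: in_keys_iff)
  then show ?thesis unfolding proj_def by simp
qed

lemma proj_sum: "proj S (\<Sum>b\<in>B. smult_mp (c b) b) = (\<Sum>b\<in>B. smult_mp (c b) (proj S b))"
  by (rule poly_mapping_eqI) (simp add: lookup_proj lookup_sum lookup_smult sum_distrib_left)

lemma proj_diff: "proj S (p - q) = proj S p - proj S q"
  by (rule poly_mapping_eqI) (simp add: lookup_proj lookup_minus)

lemma proj_single: "m \<in> S \<Longrightarrow> proj S (Poly_Mapping.single m c) = Poly_Mapping.single m c"
  by (rule poly_mapping_eqI) (auto simp: lookup_proj lookup_single when_def)

lemma smult_zero_mp[simp]: "smult_mp 0 p = 0"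
  by (rule poly_mapping_eqI) (simp add: lookup_smult)

lemma smult_one_mp[simp]: "smult_mp 1 p = p"
  by (rule poly_mapping_eqI) (simp add: lookup_smult)

lemma span_keys:
  fixes p :: "'a::field mpoly"
  assumes "Poly_Mapping.keys p \<subseteq> S"
  shows "p \<in> mp.span ((\<lambda>m. Poly_Mapping.single m 1) ` S)"
proof -
  have "p = (\<Sum>m\<in>Poly_Mapping.keys p. smult_mp (Poly_Mapping.lookup p m) (Poly_Mapping.single m 1))"
    by (subst poly_expand) (simp add: smult_mp_eq mult_single)
  also have "\<dots> \<in> mp.span ((\<lambda>m. Poly_Mapping.single m 1) ` S)"
    using assms by (intro mp.span_sum mp.span_scale mp.span_base) auto
  finally show ?thesis .
qed

lemma indep_monos: "mp.independent ((\<lambda>m. Poly_Mapping.single m (1::'a::field)) ` T)"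
  unfolding mp.independent_explicit_finite_subsets
proof (intro allI impI ballI)
  fix U u v
  assume U: "U \<subseteq> (\<lambda>m. Poly_Mapping.single m (1::'a)) ` T" "finite U"
    and s: "(\<Sum>v\<in>U. smult_mp (u v) v) = 0" and v: "v \<in> U"
  obtain m where m: "v = Poly_Mapping.single m 1" using U v by blast
  have "0 = Poly_Mapping.lookup (\<Sum>v\<in>U. smult_mp (u v) v) m" using s by simp
  also have "\<dots> = (\<Sum>w\<in>U. u w * Poly_Mapping.lookup w m)" by (simp add: lookup_sum lookup_smult)
  also have "\<dots> = u v * Poly_Mapping.lookup v m + (\<Sum>w\<in>U - {v}. u w * Poly_Mapping.lookup w m)"
    by (rule sum.remove[OF U(2) v])
  also have "(\<Sum>w\<in>U - {v}. u w * Poly_Mapping.lookup w m) = 0"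
  proof (rule sum.neutral, rule ballI)
    fix w assume "w \<in> U - {v}"
    then obtain m' where "w = Poly_Mapping.single m' 1" "m' \<noteq> m" using U m by blast
    then show "u w * Poly_Mapping.lookup w m = 0" by (simp add: lookup_single when_def)
  qed
  also have "u v * Poly_Mapping.lookup v m + 0 = u v" using m by simp
  finally show "u v = 0" by simp
qed



lemma dim_std:
  fixes I :: "'a::field mpoly set"
  assumes mi: "monomial_ideal n I" and qd: "quot_dim n I K"
  shows "finite (std n I) \<and> card (std n I) = K"
proof -
  obtain G where G: "G \<subseteq> monomials n" "I = gen_ideal n G"
    using mi unfolding monomial_ideal_def by blast
  have Ii: "is_ideal n I" using G is_ideal_gen monomials_sub by blast
  have Ipr: "I \<subseteq> polyring n" using Ii unfolding is_ideal_def by blast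
  define S where "S = std n I"
  define pi :: "'a mpoly \<Rightarrow> 'a mpoly" where "pi = proj S"
  define Mon :: "'a mpoly set" where "Mon = (\<lambda>m. Poly_Mapping.single m 1) ` S"
  obtain B where B: "finite B" "card B = K" "B \<subseteq> polyring n"
    and ind: "\<And>c. (\<Sum>b\<in>B. smult_mp (c b) b) \<in> I \<Longrightarrow> (\<forall>b\<in>B. c b = 0)"
    and sp: "\<And>p. p \<in> polyring n \<Longrightarrow> \<exists>c. p - (\<Sum>b\<in>B. smult_mp (c b) b) \<in> I"
    using qd unfolding quot_dim_def by blast
  have F1: "pi p = 0" if "p \<in> I" for p
  proof (rule poly_mapping_eqI)
    fix m
    show "Poly_Mapping.lookup (pi p) m = Poly_Mapping.lookup 0 m"
    proof (cases "m \<in> S \<and> m \<in> Poly_Mapping.keys p")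
      case True
      then have "Poly_Mapping.single m 1 \<in> I" using mono_ideal_char[OF mi that] by blast
      with True show ?thesis unfolding S_def std_def by simp
    next
      case False
      then show ?thesis by (auto simp: pi_def lookup_proj in_keys_iff)
    qed
  qed
  have F2: "p \<in> I" if "p \<in> polyring n" "pi p = 0" for p
  proof (rule ideal_from_monos[OF Ii that(1)])
    fix m assume m: "m \<in> Poly_Mapping.keys p"
    have "Poly_Mapping.lookup (pi p) m = 0" using that(2) by simp
    then have "m \<notin> S" using m by (auto simp: pi_def lookup_proj in_keys_iff)
    moreover have "Poly_Mapping.keys m \<subseteq> {..<n}" using that(1) m unfolding polyring_def by blast
    ultimately show "Poly_Mapping.single m 1 \<in> I" unfolding S_def std_def by blast
  qed
  have sumpr: "(\<Sum>b\<in>B. smult_mp (c b) b) \<in> polyring n" for c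
    using B(3) by (intro polyring_sum polyring_smult) auto
  define P where "P = pi ` B"
  have "Mon \<subseteq> mp.span P"
  proof
    fix x assume "x \<in> Mon"
    then obtain m where m: "x = Poly_Mapping.single m 1" "m \<in> S" unfolding Mon_def by blast
    then have xp: "x \<in> polyring n" unfolding S_def std_def by (auto intro: polyring_single)
    obtain c where c: "x - (\<Sum>b\<in>B. smult_mp (c b) b) \<in> I" using sp[OF xp] by blast
    have "0 = pi (x - (\<Sum>b\<in>B. smult_mp (c b) b))" using F1[OF c] by simp
    also have "\<dots> = x - (\<Sum>b\<in>B. smult_mp (c b) (pi b))"
      unfolding pi_def proj_diff proj_sum using m by (simp add: proj_single)
    finally have "x = (\<Sum>b\<in>B. smult_mp (c b) (pi b))" by simp
    also have "\<dots> \<in> mp.span P" unfolding P_def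
      by (intro mp.span_sum mp.span_scale mp.span_base) auto
    finally show "x \<in> mp.span P" .
  qed
  have fP: "finite P" using B(1) unfolding P_def by simp
  from mp.independent_span_bound[OF fP _ \<open>Mon \<subseteq> mp.span P\<close>]
  have MonB: "finite Mon \<and> card Mon \<le> card P" using indep_monos unfolding Mon_def by blast
  have injM: "inj_on (\<lambda>m. Poly_Mapping.single m (1::'a)) S" by (rule inj_onI) (metis lookup_single_eq lookup_single_not_eq one_neq_zero)
  have fS: "finite S" using MonB finite_imageD[OF _ injM] unfolding Mon_def by blast
  have cS: "card Mon = card S" unfolding Mon_def by (rule card_image[OF injM])
  have cP: "card P \<le> K" unfolding P_def using card_image_le[OF B(1)] B(2) by simp
  have injP: "inj_on pi B"
  proof (rule inj_onI, rule ccontr)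
    fix b1 b2 assume b: "b1 \<in> B" "b2 \<in> B" "pi b1 = pi b2" "b1 \<noteq> b2"
    define c :: "'a mpoly \<Rightarrow> 'a" where "c = (\<lambda>b. if b = b1 then 1 else if b = b2 then -1 else 0)"
    have "(\<Sum>b\<in>B. smult_mp (c b) b) = (\<Sum>b\<in>{b1,b2}. smult_mp (c b) b)"
      by (rule sum.mono_neutral_right) (use b B(1) in \<open>auto simp: c_def\<close>)
    also have "\<dots> = b1 - b2" using b(4)
      by (auto intro!: poly_mapping_eqI simp: lookup_add lookup_minus lookup_smult c_def)
    finally have eq: "(\<Sum>b\<in>B. smult_mp (c b) b) = b1 - b2" .
    have "pi (b1 - b2) = 0" unfolding pi_def proj_diff using b(3) unfolding pi_def by simp
    then have "b1 - b2 \<in> I" using F2 polyring_minus B(3) b(1,2) by blast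
    then have "c b1 = 0" using ind[of c] eq b(1) by simp
    then show False unfolding c_def by simp
  qed
  have cPK: "card P = K" unfolding P_def using card_image[OF injP] B(2) by simp
  have indP: "mp.independent P"
    unfolding mp.independent_explicit_finite_subsets
  proof (intro allI impI ballI)
    fix t u v
    assume t: "t \<subseteq> P" "finite t" and s: "(\<Sum>v\<in>t. smult_mp (u v) v) = 0" and v: "v \<in> t"
    define c where "c = (\<lambda>b. if pi b \<in> t then u (pi b) else 0)"
    define B' where "B' = {b\<in>B. pi b \<in> t}"
    have tB': "t = pi ` B'" using t unfolding B'_def P_def by blast
    have injB': "inj_on pi B'" using injP unfolding B'_def by (rule inj_on_subset) auto
    have "(\<Sum>b\<in>B. smult_mp (c b) (pi b)) = (\<Sum>b\<in>B'. smult_mp (c b) (pi b))"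
      unfolding B'_def by (rule sum.mono_neutral_right) (use B(1) in \<open>auto simp: c_def\<close>)
    also have "\<dots> = (\<Sum>b\<in>B'. smult_mp (u (pi b)) (pi b))"
      by (rule sum.cong) (auto simp: c_def B'_def)
    also have "\<dots> = (\<Sum>v\<in>t. smult_mp (u v) v)"
      unfolding tB' by (rule sum.reindex[OF injB', symmetric, unfolded comp_def])
    finally have "pi (\<Sum>b\<in>B. smult_mp (c b) b) = 0" using s unfolding pi_def proj_sum by simp
    then have "(\<Sum>b\<in>B. smult_mp (c b) b) \<in> I" using F2 sumpr by blast
    then have z: "\<forall>b\<in>B. c b = 0" by (rule ind)
    obtain b where "b \<in> B'" "v = pi b" using v tB' by blast
    then show "u v = 0" using z unfolding c_def B'_def by auto
  qed
  have "P \<subseteq> mp.span Mon"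
  proof
    fix x assume "x \<in> P"
    then obtain b where "x = pi b" unfolding P_def by blast
    have "Poly_Mapping.keys x \<subseteq> S" unfolding \<open>x = pi b\<close> pi_def
      by (auto simp: in_keys_iff lookup_proj split: if_splits)
    then show "x \<in> mp.span Mon" unfolding Mon_def by (rule span_keys)
  qed
  from mp.independent_span_bound[OF _ indP this] MonB
  have "card P \<le> card Mon" by blast
  then show ?thesis using fS cS cPK MonB cP unfolding S_def by linarith
qed



fun gen :: "(nat \<times> nat) list \<Rightarrow> (nat \<Rightarrow>\<^sub>0 nat) list" where
  "gen [] = [0]"
| "gen ((i,t)#cs) = (gen cs ! i + Poly_Mapping.single t 1) # gen cs"

fun codes :: "nat \<Rightarrow> nat \<Rightarrow> (nat \<times> nat) list set" where
  "codes n 0 = {[]}"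
| "codes n (Suc k) = (\<lambda>(p, cs). p # cs) ` (({..k} \<times> {..<n}) \<times> codes n k)"

lemma length_gen: "length (gen cs) = Suc (length cs)"
  by (induction cs rule: gen.induct) auto

lemma codes_len: "cs \<in> codes n k \<Longrightarrow> length cs = k"
  by (induction k arbitrary: cs) auto

lemma codes_card: "finite (codes n k) \<and> card (codes n k) = n ^ k * fact k"
proof (induction k)
  case 0 then show ?case by simp
next
  case (Suc k)
  have inj: "inj_on (\<lambda>(p, cs). p # cs) (({..k} \<times> {..<n}) \<times> codes n k)"
    by (auto intro!: inj_onI)
  have "card (codes n (Suc k)) = card (({..k} \<times> {..<n}) \<times> codes n k)"
    by (simp add: card_image[OF inj])
  also have "\<dots> = (Suc k * n) * (n ^ k * fact k)" using Suc by (simp add: card_cartesian_product)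
  also have "\<dots> = n ^ Suc k * fact (Suc k)" by (simp add: algebra_simps)
  finally show ?case using Suc by simp
qed

definition degn :: "nat \<Rightarrow> (nat \<Rightarrow>\<^sub>0 nat) \<Rightarrow> nat" where
  "degn n m = (\<Sum>i<n. Poly_Mapping.lookup m i)"

definition downclosed :: "(nat \<Rightarrow>\<^sub>0 nat) set \<Rightarrow> bool" where
  "downclosed D \<longleftrightarrow> (\<forall>m\<in>D. \<forall>m'. pdiv m' m \<longrightarrow> m' \<in> D)"

lemma degn_add: "degn n (a + b) = degn n a + degn n b"
  by (simp add: degn_def lookup_add sum.distrib)

lemma degn_zero: assumes "Poly_Mapping.keys m \<subseteq> {..<n}" "degn n m = 0" shows "m = 0"
proof (rule poly_mapping_eqI)
  fix i
  show "Poly_Mapping.lookup m i = Poly_Mapping.lookup 0 i"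
  proof (cases "i < n")
    case True then show ?thesis using assms(2) by (simp add: degn_def)
  next
    case False then have "i \<notin> Poly_Mapping.keys m" using assms(1) by auto
    then show ?thesis by (simp add: in_keys_iff)
  qed
qed

lemma comb_main:
  "finite D \<Longrightarrow> card D = Suc k \<Longrightarrow> (\<forall>m\<in>D. Poly_Mapping.keys m \<subseteq> {..<n}) \<Longrightarrow> downclosed D
   \<Longrightarrow> \<exists>cs\<in>codes n k. set (gen cs) = D"
proof (induction k arbitrary: D)
  case 0
  then obtain x where D: "D = {x}" by (auto simp: card_Suc_eq)
  have "pdiv 0 x" by (simp add: pdiv_def)
  then have "0 \<in> D" using 0(4) D unfolding downclosed_def by blast
  then show ?case using D by auto
next
  case (Suc k)
  note fD = Suc.prems(1) and cD = Suc.prems(2) and kD = Suc.prems(3) and dD = Suc.prems(4)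
  have "D \<noteq> {}" using cD by auto
  obtain x where x: "x \<in> D" "\<forall>y\<in>D. degn n y \<le> degn n x"
    using ex_has_greatest_nat_lemma fD \<open>D \<noteq> {}\<close>
    by (metis (no_types, lifting) Max_ge Max_in finite_imageI image_iff image_is_empty)
  have pdle: "y = x" if "y \<in> D" "pdiv x y" for y
  proof -
    have eq: "y = (y - x) + x" using pdiv_add[OF that(2)] by simp
    have "degn n y = degn n (y - x) + degn n x" by (subst eq) (simp add: degn_add)
    moreover have "degn n y \<le> degn n x" using x(2) that(1) by blast
    ultimately have "degn n (y - x) = 0" by linarith
    moreover have "Poly_Mapping.keys (y - x) \<subseteq> {..<n}" using keys_minus_sub[of y x] kD that(1) by blast
    ultimately have "y - x = 0" using degn_zero by blast
    then show ?thesis using eq by simp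
  qed
  define D' where "D' = D - {x}"
  have dD': "downclosed D'" unfolding downclosed_def
  proof (intro ballI allI impI)
    fix m m' assume m: "m \<in> D'" "pdiv m' m"
    then have "m' \<in> D" using dD unfolding downclosed_def D'_def by blast
    moreover have "m' \<noteq> x" using pdle m unfolding D'_def by blast
    ultimately show "m' \<in> D'" unfolding D'_def by blast
  qed
  have cD': "card D' = Suc k" using cD x(1) fD unfolding D'_def by simp
  obtain cs' where cs': "cs' \<in> codes n k" "set (gen cs') = D'"
    using Suc.IH[of D'] fD cD' kD dD' unfolding D'_def by auto
  have "x \<noteq> 0"
  proof
    assume "x = 0"
    have "\<forall>y\<in>D. y = 0"
    proof
      fix y assume "y \<in> D"
      then have "degn n y \<le> degn n 0" using x(2) \<open>x = 0\<close> by blast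
      then have "degn n y = 0" by (simp add: degn_def)
      then show "y = 0" using degn_zero kD \<open>y \<in> D\<close> by blast
    qed
    then have "D \<subseteq> {0}" by blast
    then have "card D \<le> 1" using card_mono[of "{0}" D] by simp
    then show False using cD by simp
  qed
  then obtain t where t: "Poly_Mapping.lookup x t \<noteq> 0" by (metis poly_mapping_eqI lookup_zero)
  have "t \<in> Poly_Mapping.keys x" using t by (simp add: in_keys_iff)
  then have tn: "t < n" using kD x(1) by blast
  define y where "y = x - Poly_Mapping.single t 1"
  have pyx: "pdiv y x" unfolding y_def pdiv_def by (simp add: lookup_minus)
  have yx: "y + Poly_Mapping.single t 1 = x"
    by (rule poly_mapping_eqI) (use t in \<open>auto simp: y_def lookup_add lookup_minus lookup_single when_def\<close>)
  have "y \<noteq> x"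
  proof
    assume "y = x"
    then have "Poly_Mapping.lookup y t = Poly_Mapping.lookup x t" by simp
    then show False using t unfolding y_def by (simp add: lookup_minus)
  qed
  then have "y \<in> D'" using dD x(1) pyx unfolding downclosed_def D'_def by blast
  then obtain i where i: "i < length (gen cs')" "gen cs' ! i = y" using cs'(2) by (metis in_set_conv_nth)
  have "i \<le> k" using i(1) codes_len[OF cs'(1)] by (simp add: length_gen)
  then have "(i,t) # cs' \<in> codes n (Suc k)" using tn cs'(1) by force
  moreover have "set (gen ((i,t) # cs')) = D"
    using cs'(2) i(2) yx x(1) unfolding D'_def by auto
  ultimately show ?case by blast
qed

lemma fact_le_pow: "fact (Suc m) \<le> (Suc m) ^ m"
proof (induction m)
  case 0 then show ?case by simp
next
  case (Suc m)
  have "fact (Suc (Suc m)) = Suc (Suc m) * fact (Suc m)" by simp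
  also have "\<dots> \<le> Suc (Suc m) * (Suc m) ^ m" by (rule mult_le_mono2[OF Suc.IH])
  also have "\<dots> \<le> Suc (Suc m) * (Suc (Suc m)) ^ m" by (rule mult_le_mono2, rule power_mono) auto
  finally show ?case by simp
qed

lemma bound_nat:
  assumes "K \<ge> 2" "n \<ge> 1"
  shows "n ^ (K - 1) * fact (K - 1) \<le> K ^ n * (K + n - 2) ^ ((n - 1) * (K - 1)) * (2 * K - 3) ^ (K - 2)"
proof -
  have f1: "fact (K - 1) \<le> (2 * K - 3) ^ (K - 2)"
  proof -
    have e: "K - 1 = Suc (K - 2)" using assms by arith
    have "fact (K - 1) \<le> (K - 1) ^ (K - 2)" using fact_le_pow[of "K - 2"] unfolding e[symmetric] .
    also have "\<dots> \<le> (2 * K - 3) ^ (K - 2)" by (rule power_mono) (use assms in arith)+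
    finally show ?thesis .
  qed
  have f2: "n ^ (K - 1) \<le> (K + n - 2) ^ ((n - 1) * (K - 1))"
  proof (cases "n = 1")
    case True then show ?thesis by simp
  next
    case False
    have "n ^ (K - 1) \<le> (K + n - 2) ^ (K - 1)" by (rule power_mono) (use assms in arith)+
    also have "\<dots> \<le> (K + n - 2) ^ ((n - 1) * (K - 1))"
    proof (rule power_increasing)
      have "1 \<le> n - 1" using False assms by simp
      then show "K - 1 \<le> (n - 1) * (K - 1)" using mult_le_mono1[of 1 "n - 1" "K - 1"] by simp
      show "1 \<le> K + n - 2" using assms by arith
    qed
    finally show ?thesis .
  qed
  have f3: "1 \<le> K ^ n" using assms by (simp add: one_le_power)
  have "n ^ (K - 1) * fact (K - 1) \<le> (K + n - 2) ^ ((n - 1) * (K - 1)) * (2 * K - 3) ^ (K - 2)"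
    by (rule mult_le_mono[OF f2 f1])
  also have "\<dots> \<le> K ^ n * ((K + n - 2) ^ ((n - 1) * (K - 1)) * (2 * K - 3) ^ (K - 2))"
    using f3 by simp
  finally show ?thesis by (simp add: mult.assoc)
qed



lemma pdiv_keys: "pdiv m' m \<Longrightarrow> Poly_Mapping.keys m' \<subseteq> Poly_Mapping.keys m"
  unfolding pdiv_def by (auto simp: in_keys_iff) (metis order.strict_trans2)

lemma std_down:
  fixes I :: "'a::field mpoly set"
  assumes Ii: "is_ideal n I" shows "downclosed (std n I)"
  unfolding downclosed_def
proof (intro ballI allI impI)
  fix m m' assume m: "m \<in> std n I" "pdiv m' m"
  have km: "Poly_Mapping.keys m \<subseteq> {..<n}" using m(1) unfolding std_def by blast
  then have km': "Poly_Mapping.keys m' \<subseteq> {..<n}" using pdiv_keys[OF m(2)] by blast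
  have "Poly_Mapping.single m' (1::'a) \<notin> I"
  proof
    assume a: "Poly_Mapping.single m' (1::'a) \<in> I"
    have "Poly_Mapping.keys (m - m') \<subseteq> {..<n}" using keys_minus_sub[of m m'] km by blast
    then have "Poly_Mapping.single (m - m') (1::'a) \<in> polyring n" by (rule polyring_single)
    then have "Poly_Mapping.single (m - m') 1 * Poly_Mapping.single m' (1::'a) \<in> I"
      using Ii a unfolding is_ideal_def by blast
    moreover have "Poly_Mapping.single (m - m') (1::'a) * Poly_Mapping.single m' 1 = Poly_Mapping.single m 1"
      by (simp only: mult_single pdiv_add[OF m(2)] mult_1)
    ultimately show False using m(1) unfolding std_def by simp
  qed
  then show "m' \<in> std n I" using km' unfolding std_def by blast
qed

lemma mono_is_ideal: "monomial_ideal n I \<Longrightarrow> is_ideal n I"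
  unfolding monomial_ideal_def using is_ideal_gen monomials_sub by blast

lemma std_det:
  fixes I :: "'a::field mpoly set"
  assumes mi: "monomial_ideal n I"
  shows "I = {p \<in> polyring n. \<forall>m\<in>Poly_Mapping.keys p. m \<notin> std n I}"
proof
  have Ii: "is_ideal n I" using mi by (rule mono_is_ideal)
  show "I \<subseteq> {p \<in> polyring n. \<forall>m\<in>Poly_Mapping.keys p. m \<notin> std n I}"
    using mono_ideal_char[OF mi] Ii unfolding is_ideal_def std_def by blast
  show "{p \<in> polyring n. \<forall>m\<in>Poly_Mapping.keys p. m \<notin> std n I} \<subseteq> I"
  proof
    fix p :: "'a mpoly" assume p: "p \<in> {p \<in> polyring n. \<forall>m\<in>Poly_Mapping.keys p. m \<notin> std n I}"
    show "p \<in> I"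
    proof (rule ideal_from_monos[OF Ii])
      show "p \<in> polyring n" using p by blast
      fix m assume "m \<in> Poly_Mapping.keys p"
      then show "Poly_Mapping.single m 1 \<in> I" using p unfolding std_def polyring_def by blast
    qed
  qed
qed

lemma card_M:
  assumes K: "K \<ge> 1"
  shows "finite (M TYPE('a::field) n K) \<and> card (M TYPE('a) n K) \<le> n ^ (K - 1) * fact (K - 1)"
proof -
  let ?M = "M TYPE('a) n K"
  have inj: "inj_on (std n) ?M"
  proof (rule inj_onI)
    fix I J assume "I \<in> ?M" "J \<in> ?M" "std n I = std n J"
    then show "I = J" using std_det[of n I] std_det[of n J] unfolding M_def by auto
  qed
  have sub: "std n ` ?M \<subseteq> (set \<circ> gen) ` codes n (K - 1)"
  proof
    fix D assume "D \<in> std n ` ?M"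
    then obtain I where I: "I \<in> ?M" "D = std n I" by blast
    then have mi: "monomial_ideal n I" and qd: "quot_dim n I K" unfolding M_def by auto
    have "finite D \<and> card D = K" using dim_std[OF mi qd] I(2) by simp
    moreover have "\<forall>m\<in>D. Poly_Mapping.keys m \<subseteq> {..<n}" using I(2) unfolding std_def by blast
    moreover have "downclosed D" using I(2) std_down[OF mono_is_ideal[OF mi]] by simp
    ultimately obtain cs where "cs \<in> codes n (K - 1)" "set (gen cs) = D"
      using comb_main[of D "K - 1" n] K by auto
    then show "D \<in> (set \<circ> gen) ` codes n (K - 1)" by force
  qed
  have fc: "finite (codes n (K - 1))" using codes_card by blast
  have f1: "finite (std n ` ?M)" using finite_subset[OF sub] fc by blast
  have fM: "finite ?M" using finite_imageD[OF f1 inj] .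
  have "card ?M = card (std n ` ?M)" using card_image[OF inj] by simp
  also have "\<dots> \<le> card ((set \<circ> gen) ` codes n (K - 1))" by (rule card_mono[OF _ sub]) (use fc in simp)
  also have "\<dots> \<le> card (codes n (K - 1))" by (rule card_image_le[OF fc])
  also have "\<dots> = n ^ (K - 1) * fact (K - 1)" using codes_card by blast
  finally show ?thesis using fM by simp
qed



lemma single_nz[simp]: "Poly_Mapping.single i (Suc 0) \<noteq> 0"
  by (metis lookup_single_eq lookup_zero nat.distinct(1))

lemma M1_nonempty: "\<exists>I. I \<in> M TYPE('a::field) n 1"
proof -
  define G0 :: "'a mpoly set" where "G0 = {Poly_Mapping.single (Poly_Mapping.single i 1) 1 | i. i < n}"
  define I0 where "I0 = gen_ideal n G0"
  have G0m: "G0 \<subseteq> monomials n" unfolding G0_def monomials_def by auto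
  have mi: "monomial_ideal n I0" unfolding monomial_ideal_def I0_def using G0m by blast
  have Ii: "is_ideal n I0" using mi by (rule mono_is_ideal)
  define J :: "'a mpoly set" where "J = {p \<in> polyring n. Poly_Mapping.lookup p 0 = 0}"
  have "is_ideal n J" unfolding is_ideal_def
  proof (intro conjI ballI)
    show "J \<subseteq> polyring n" unfolding J_def by blast
    show "0 \<in> J" unfolding J_def by simp
  next
    fix p q assume "p \<in> J" "q \<in> J" then show "p + q \<in> J"
      unfolding J_def by (auto intro: polyring_add simp: lookup_add)
  next
    fix r p :: "'a mpoly" assume r: "r \<in> polyring n" and p: "p \<in> J"
    have "0 \<notin> Poly_Mapping.keys (r * p)"
    proof
      assume "0 \<in> Poly_Mapping.keys (r * p)"
      then obtain a b where ab: "0 = a + b" "b \<in> Poly_Mapping.keys p" using keys_mult[of r p] by blast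
      have "b = 0" by (rule poly_mapping_eqI) (metis ab(1) add_is_0 lookup_add lookup_zero)
      then show False using ab(2) p unfolding J_def by (simp add: in_keys_iff)
    qed
    then show "r * p \<in> J" unfolding J_def using r p polyring_mult[of r n p] J_def
      by (simp add: in_keys_iff)
  qed
  moreover have "G0 \<subseteq> J" unfolding G0_def J_def
    by (auto intro!: polyring_single simp: lookup_single when_def)
  ultimately have I0J: "I0 \<subseteq> J" unfolding I0_def by (rule gen_least)
  have one_pr: "(1::'a mpoly) \<in> polyring n" by (simp add: polyring_def)
  have "quot_dim n I0 1" unfolding quot_dim_def
  proof (intro exI[of _ "{1}"] conjI allI impI ballI)
    show "finite {1::'a mpoly}" "card {1::'a mpoly} = 1" "{1::'a mpoly} \<subseteq> polyring n" using one_pr by auto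
  next
    fix c b assume "(\<Sum>b\<in>{1::'a mpoly}. smult_mp (c b) b) \<in> I0" "b \<in> {1::'a mpoly}"
    then show "c b = 0" using I0J unfolding J_def by (auto simp: lookup_smult)
  next
    fix p :: "'a mpoly" assume p: "p \<in> polyring n"
    define q where "q = p - smult_mp (Poly_Mapping.lookup p 0) 1"
    have qp: "q \<in> polyring n" unfolding q_def using p one_pr by (intro polyring_minus polyring_smult)
    have "q \<in> I0"
    proof (rule ideal_from_monos[OF Ii qp])
      fix m assume m: "m \<in> Poly_Mapping.keys q"
      have km: "Poly_Mapping.keys m \<subseteq> {..<n}" using qp m unfolding polyring_def by blast
      have "m \<noteq> 0" using m unfolding q_def by (auto simp: in_keys_iff lookup_minus lookup_smult)
      then obtain t where t: "Poly_Mapping.lookup m t \<noteq> 0" by (metis poly_mapping_eqI lookup_zero)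
      have "t \<in> Poly_Mapping.keys m" using t by (simp add: in_keys_iff)
      then have tn: "t < n" using km by blast
      have pd: "pdiv (Poly_Mapping.single t 1) m" using t
        by (auto simp: pdiv_def lookup_single when_def)
      have "Poly_Mapping.keys (m - Poly_Mapping.single t 1) \<subseteq> {..<n}"
        using keys_minus_sub[of m] km by blast
      then have s1: "Poly_Mapping.single (m - Poly_Mapping.single t 1) (1::'a) \<in> polyring n"
        by (rule polyring_single)
      have s2: "Poly_Mapping.single (Poly_Mapping.single t 1) (1::'a) \<in> I0"
        using tn gen_sub[of G0 n] unfolding I0_def G0_def by blast
      have "Poly_Mapping.single (m - Poly_Mapping.single t 1) 1 * Poly_Mapping.single (Poly_Mapping.single t 1) (1::'a) \<in> I0"
        using Ii s1 s2 unfolding is_ideal_def by blast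
      moreover have "Poly_Mapping.single (m - Poly_Mapping.single t 1) (1::'a) * Poly_Mapping.single (Poly_Mapping.single t 1) 1 = Poly_Mapping.single m 1"
        by (simp only: mult_single pdiv_add[OF pd] mult_1)
      ultimately show "Poly_Mapping.single m 1 \<in> I0" by simp
    qed
    then show "\<exists>c. p - (\<Sum>b\<in>{1::'a mpoly}. smult_mp (c b) b) \<in> I0"
      unfolding q_def by (intro exI[of _ "\<lambda>_. Poly_Mapping.lookup p 0"]) simp
  qed
  then show ?thesis using mi unfolding M_def by blast
qed

lemma asymp_lim:
  fixes R :: real and n :: nat assumes "R > 1" "n \<ge> 1"
  shows "((\<lambda>x. exp (x * ln (real n) + x * ln x - x powr (3/2) * ln R)) \<longlongrightarrow> 0) at_top"
proof -
  have "ln R > 0" using assms by simp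
  then show ?thesis using assms by real_asymp
qed

lemma asymp_bound:
  fixes R :: real and n :: nat assumes R: "R > 1" and n: "n \<ge> 1"
  shows "\<exists>c. \<forall>K\<ge>1. real (n ^ K * K ^ K) \<le> c * R powr (real K powr (3 / 2))"
proof -
  define f where "f = (\<lambda>x::real. exp (x * ln (real n) + x * ln x - x powr (3/2) * ln R))"
  have "(f \<longlongrightarrow> 0) at_top" unfolding f_def by (rule asymp_lim[OF R n])
  then have "(\<lambda>K. f (real K)) \<longlonglongrightarrow> 0"
    using filterlim_compose filterlim_real_sequentially by blast
  then have "Bseq (\<lambda>K. f (real K))" by (rule convergent_imp_Bseq[OF convergentI])
  then obtain c where c: "\<forall>K. norm (f (real K)) \<le> c" by (rule BseqE)
  show ?thesis
  proof (intro exI[of _ c] allI impI)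
    fix K :: nat assume K: "K \<ge> 1"
    have "real (n ^ K * K ^ K) = exp (real K * ln (real n)) * exp (real K * ln (real K))"
      using n K by (simp add: exp_of_nat_mult)
    also have "\<dots> = f (real K) * exp (real K powr (3/2) * ln R)"
      unfolding f_def by (simp add: exp_add exp_diff)
    also have "\<dots> \<le> c * exp (real K powr (3/2) * ln R)"
      using c[rule_format, of K] by (intro mult_right_mono) auto
    also have "\<dots> = c * R powr (real K powr (3 / 2))" using R by (simp add: powr_def mult.commute)
    finally show "real (n ^ K * K ^ K) \<le> c * R powr (real K powr (3 / 2))" .
  qed
qed



theorem mainTheorem1:
  fixes n :: nat
  assumes "n \<ge> 1"
  shows "card (M TYPE('a::field) n 1) = 1
    \<and> (\<forall>K\<ge>2. finite (M TYPE('a) n K) \<and>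
         real (card (M TYPE('a) n K))
           \<le> real K ^ n * real (K + n - 2) ^ ((n - 1) * (K - 1)) * real (2 * K - 3) ^ (K - 2))
    \<and> (\<forall>R::real. R > 1 \<longrightarrow> (\<exists>c::real. \<forall>K\<ge>1.
         real (card (M TYPE('a) n K)) \<le> c * R powr (real K powr (3 / 2))))"
proof (intro conjI allI impI)
  have c1: "finite (M TYPE('a) n 1) \<and> card (M TYPE('a) n 1) \<le> 1" using card_M[of 1 n] by simp
  obtain I where "I \<in> M TYPE('a) n 1" using M1_nonempty by blast
  then have "card (M TYPE('a) n 1) \<noteq> 0" using c1 by auto
  then show "card (M TYPE('a) n 1) = 1" using c1 by linarith
next
  fix K :: nat assume K: "K \<ge> 2"
  have c: "finite (M TYPE('a) n K) \<and> card (M TYPE('a) n K) \<le> n ^ (K - 1) * fact (K - 1)"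
    using card_M[of K n] K by simp
  then show "finite (M TYPE('a) n K)" by blast
  have "card (M TYPE('a) n K) \<le> K ^ n * (K + n - 2) ^ ((n - 1) * (K - 1)) * (2 * K - 3) ^ (K - 2)"
    using c bound_nat[OF K assms] by linarith
  then have "real (card (M TYPE('a) n K)) \<le> real (K ^ n * (K + n - 2) ^ ((n - 1) * (K - 1)) * (2 * K - 3) ^ (K - 2))"
    by (simp only: of_nat_le_iff)
  then show "real (card (M TYPE('a) n K))
           \<le> real K ^ n * real (K + n - 2) ^ ((n - 1) * (K - 1)) * real (2 * K - 3) ^ (K - 2)"
    by (simp only: of_nat_mult of_nat_power)
next
  fix R :: real assume R: "R > 1"
  obtain c where c: "\<forall>K\<ge>1. real (n ^ K * K ^ K) \<le> c * R powr (real K powr (3 / 2))"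
    using asymp_bound[OF R assms] by blast
  show "\<exists>c::real. \<forall>K\<ge>1. real (card (M TYPE('a) n K)) \<le> c * R powr (real K powr (3 / 2))"
  proof (intro exI[of _ c] allI impI)
    fix K :: nat assume K: "K \<ge> 1"
    have "card (M TYPE('a) n K) \<le> n ^ (K - 1) * fact (K - 1)" using card_M[OF K] by blast
    also have "\<dots> \<le> n ^ K * K ^ K"
    proof (rule mult_le_mono)
      show "n ^ (K - 1) \<le> n ^ K" by (rule power_increasing) (use assms in auto)
      have "fact (K - 1) \<le> (fact K :: nat)" by (rule fact_mono) simp
      also have "\<dots> \<le> K ^ K" using fact_le_power[of K, where 'a = nat] by simp
      finally show "fact (K - 1) \<le> K ^ K" .
    qed
    finally have "real (card (M TYPE('a) n K)) \<le> real (n ^ K * K ^ K)" by (simp only: of_nat_le_iff)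
    also have "\<dots> \<le> c * R powr (real K powr (3 / 2))" using c K by blast
    finally show "real (card (M TYPE('a) n K)) \<le> c * R powr (real K powr (3 / 2))" .
  qed
qed


end
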